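(* Let $\gamma\in\mathbb{R}$, $\psi:\mathbb{N}\to[0,\tfrac12]$, and let $\mathcal{I}_q\subseteq\mathbb{Z}_q$ ($q\in\mathbb{N}$) be such that $\tfrac1q\mathcal{I}_q$ is uniformly distributed modulo 1, i.e. for all $0\le x\le y\le1$, $$\lim_{q\to\infty}\frac{\#\{a\in\mathcal{I}_q: a/q\in[x,y)\}}{|\mathcal{I}_q|}=y-x.$$ Suppose there exist constants $C'>0$, $c>0$ and finite sets $\mathcal{S}_k\subset\mathbb{Z}$ with $\min\mathcal{S}_k\to+\infty$ such that for all sufficiently large $k$, $$\sum_{q\in\mathcal{S}_k}\frac{|\mathcal{I}_q|\psi(q)}{q}\ge c\qquad\text{and}\qquad\sum_{\substack{r<q\\ q,r\in\mathcal{S}_k}}\mu(E_q^{\mathcal{I}}\cap E_r^{\mathcal{I}})\le C'\Big(\sum_{q\in\mathcal{S}_k}\frac{|\mathcal{I}_q|\psi(q)}{q}\Big)^2.$$ Then $\mu(\limsup_{q\to\infty}E_q^{\mathcal{I}})=1$.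
   Context: $\mu$ is Lebesgue measure, $\mathbb{Z}_q=\{0,\dots,q-1\}$, $\|y\|$ is the distance from $y$ to the nearest integer, and $$E_q^{\mathcal{I}}=E_q^{\mathcal{I}}(\gamma,\psi):=\Big\{x\in[0,1]:\Big\|x-\frac{a+\gamma}{q}\Big\|\le\frac{\psi(q)}{q}\text{ for some }a\in\mathcal{I}_q\Big\}.$$ *)

theory Defs
  imports "HOL-Analysis.Analysis" "HOL-Library.Liminf_Limsup"
begin

definition dist_nint :: "real \<Rightarrow> real" where
  "dist_nint y = \<bar>y - of_int (round y)\<bar>"

definition E_set :: "(nat \<Rightarrow> nat set) \<Rightarrow> real \<Rightarrow> (nat \<Rightarrow> real) \<Rightarrow> nat \<Rightarrow> real set" where
  "E_set I \<gamma> \<psi> q = {x \<in> {0..1}. \<exists>a \<in> I q.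
      dist_nint (x - (real a + \<gamma>) / real q) \<le> \<psi> q / real q}"

end

theory Submission
  imports Defs
begin



lemma dn_meas: "(\<lambda>x. dist_nint (x - c)) \<in> borel_measurable borel"
  unfolding dist_nint_def round_def by measurable


lemma E_sets:
  assumes "finite (I q)"
  shows "E_set I \<gamma> \<psi> q \<in> sets lebesgue"
proof -
  have eq: "E_set I \<gamma> \<psi> q = {0..1} \<inter> (\<Union>a\<in>I q. {x. dist_nint (x - (real a + \<gamma>) / real q) \<le> \<psi> q / real q})"
    unfolding E_set_def by auto
  have "{x. dist_nint (x - (real a + \<gamma>) / real q) \<le> \<psi> q / real q} \<in> sets borel" for a
    using dn_meas[of "(real a + \<gamma>) / real q"] by measurable
  then have "E_set I \<gamma> \<psi> q \<in> sets borel" unfolding eq using assms by auto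
  then show ?thesis by simp
qed




lemma Icc_leb: "l \<le> u \<Longrightarrow> measure lebesgue {l..u::real} = u - l"
  by (simp add: measure_completion)

lemma E_ub:
  assumes I: "I q \<subseteq> {0..<q}" and ps: "0 \<le> \<psi> q" "\<psi> q \<le> 1/2"
  shows "measure lebesgue (E_set I \<gamma> \<psi> q) \<le> 8 * (real (card (I q)) * \<psi> q / real q)"
proof -
  define r where "r = \<psi> q / real q"
  have r0: "r \<ge> 0" using ps by (simp add: r_def)
  define c where "c = (\<lambda>a::nat. (real a + \<gamma>) / real q)"
  define k where "k = (\<lambda>a. \<lceil>- c a - 1\<rceil>)"
  define F where "F = (\<lambda>(a,j::nat). {c a + of_int (k a) + real j - r .. c a + of_int (k a) + real j + r})"
  have fin: "finite (I q)" using I by (rule finite_subset) simp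
  have sub: "E_set I \<gamma> \<psi> q \<subseteq> (\<Union>p\<in>I q \<times> {0..<4::nat}. F p)"
  proof
    fix x assume "x \<in> E_set I \<gamma> \<psi> q"
    then obtain a where a: "a \<in> I q" and x01: "0 \<le> x" "x \<le> 1"
      and d: "\<bar>x - c a - of_int (round (x - c a))\<bar> \<le> r"
      unfolding E_set_def dist_nint_def c_def r_def by auto
    define m where "m = round (x - c a)"
    have rl: "r \<le> 1/2"
    proof (cases "q = 0")
      case False
      then have "real q \<ge> 1" by simp
      then have "\<psi> q \<le> 1/2 * real q" using ps by linarith
      then show ?thesis unfolding r_def using \<open>real q \<ge> 1\<close> by (simp add: divide_le_eq)
    qed (simp add: r_def)
    have m1: "of_int m \<ge> - c a - 1" "of_int m \<le> 2 - c a" using d x01 rl unfolding m_def[symmetric] by linarith+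
    have ka: "of_int (k a) \<ge> - c a - 1" "of_int (k a) < - c a" unfolding k_def using ceiling_correct[of "- c a - 1"] by linarith+
    have mk1: "m \<ge> k a" using m1 ka by linarith
    have mk2: "m < k a + 4" using m1 ka by linarith
    define j where "j = nat (m - k a)"
    have j4: "j < 4" using mk1 mk2 unfolding j_def by linarith
    have mj: "real_of_int m = of_int (k a) + real j" using mk1 unfolding j_def by simp
    have "x \<in> F (a, j)" unfolding F_def using d unfolding m_def[symmetric] mj by auto
    moreover have "(a,j) \<in> I q \<times> {0..<4::nat}" using a j4 by simp
    ultimately show "x \<in> (\<Union>p\<in>I q \<times> {0..<4::nat}. F p)" by blast
  qed
  have "measure lebesgue (E_set I \<gamma> \<psi> q) \<le> measure lebesgue (\<Union>p\<in>I q \<times> {0..<4::nat}. F p)"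
    apply (rule measure_mono_fmeasurable[OF sub])
    using E_sets[of I q \<gamma> \<psi>, OF fin] apply simp
    apply (rule fmeasurable.finite_UN) using fin apply (auto simp: F_def)
    done
  also have "\<dots> \<le> (\<Sum>p\<in>I q \<times> {0..<4::nat}. measure lebesgue (F p))"
    by (rule measure_UNION_le) (use fin in \<open>auto simp: F_def\<close>)
  also have "\<dots> = (\<Sum>p\<in>I q \<times> {0..<4::nat}. 2 * r)"
    by (rule sum.cong) (auto simp: F_def Icc_leb r0)
  also have "\<dots> = 8 * (real (card (I q)) * \<psi> q / real q)"
    by (simp add: card_cartesian_product r_def)
  finally show ?thesis .
qed




lemma dn_le: "dist_nint y \<le> \<bar>y\<bar>"
  unfolding dist_nint_def using round_diff_minimal[of y 0] by simp

lemma E_lb: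
  assumes ps: "0 \<le> \<psi> q'" "\<And>q. 0 \<le> \<psi> q \<and> \<psi> q \<le> 1/2"
    and unif: "\<And>x y. 0 \<le> x \<Longrightarrow> x \<le> y \<Longrightarrow> y \<le> 1 \<Longrightarrow>
       ((\<lambda>q. real (card {a \<in> I q. real a / real q \<in> {x..<y}}) / real (card (I q)))
          \<longlongrightarrow> y - x) sequentially"
    and I_sub: "\<And>q. I q \<subseteq> {0..<q}"
    and uv: "0 \<le> u" "u \<le> v" "v \<le> 1" and d: "\<delta> > 0"
  shows "\<forall>\<^sub>F q in sequentially. measure lebesgue (E_set I \<gamma> \<psi> q \<inter> {u<..<v})
            \<ge> 2 * (real (card (I q)) * \<psi> q / real q) * (v - u - \<delta>)"
proof (cases "v - u \<le> \<delta>")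
  case True
  have neg: "2 * (real (card (I q)) * \<psi> q / real q) * (v - u - \<delta>) \<le> 0" for q
    using True ps(2)[of q] by (intro mult_nonneg_nonpos) auto
  have ge: "measure lebesgue (E_set I \<gamma> \<psi> q \<inter> {u<..<v})
            \<ge> 2 * (real (card (I q)) * \<psi> q / real q) * (v - u - \<delta>)" for q
    using neg[of q] measure_nonneg[of lebesgue "E_set I \<gamma> \<psi> q \<inter> {u<..<v}"] by linarith
  show ?thesis by (rule always_eventually) (use ge in blast)
next
  case False
  define \<eta> where "\<eta> = \<delta> / 4"
  have eta: "\<eta> > 0" using d by (simp add: \<eta>_def)
  define x where "x = u + \<eta>"
  define y where "y = v - \<eta>"
  have xy: "0 \<le> x" "x \<le> y" "y \<le> 1" using False uv eta unfolding x_def y_def \<eta>_def by auto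
  have ev1: "\<forall>\<^sub>F q in sequentially. y - x - \<eta> < real (card {a \<in> I q. real a / real q \<in> {x..<y}}) / real (card (I q))"
    by (rule order_tendstoD(1)[OF unif[OF xy]]) (use eta in auto)
  define N where "N = nat \<lceil>(\<bar>\<gamma>\<bar> + 1) / \<eta>\<rceil> + 1"
  have ev2: "\<forall>\<^sub>F q in sequentially. N \<le> q" by (rule eventually_ge_at_top)
  show ?thesis using ev1 ev2
  proof eventually_elim
    case (elim q)
    have qN: "real q \<ge> real N" using elim(2) by simp
    have "real N > (\<bar>\<gamma>\<bar> + 1) / \<eta>" unfolding N_def using real_nat_ceiling_ge[of "(\<bar>\<gamma>\<bar> + 1) / \<eta>"] by simp
    then have qbig: "real q > (\<bar>\<gamma>\<bar> + 1) / \<eta>" using qN by linarith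
    have q0: "real q > 0" using qbig eta divide_pos_pos[of "\<bar>\<gamma>\<bar> + 1" \<eta>] by linarith
    have small: "(\<bar>\<gamma>\<bar> + 1) / real q < \<eta>" using qbig q0 eta by (simp add: field_simps)
    define r where "r = \<psi> q / real q"
    have r0: "0 \<le> r" using ps(2)[of q] q0 by (simp add: r_def)
    have r1: "2 * r \<le> 1 / real q" using ps(2)[of q] q0 by (simp add: r_def field_simps)
    have rsm: "r \<le> 1 / real q" using r1 r0 by linarith
    define c where "c = (\<lambda>a::nat. (real a + \<gamma>) / real q)"
    define G where "G = (\<lambda>a. {c a - r ..< c a + r})"
    define A where "A = {a \<in> I q. real a / real q \<in> {x..<y}}"
    have finI: "finite (I q)" using I_sub[of q] by (rule finite_subset) simp
    have finA: "finite A" unfolding A_def using finI by simp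
    have gam: "\<bar>\<gamma>\<bar> / real q + 1 / real q < \<eta>" using small by (simp add: add_divide_distrib)
    have cdiff: "\<bar>c a - real a / real q\<bar> = \<bar>\<gamma>\<bar> / real q" for a
      unfolding c_def using q0 by (simp add: add_divide_distrib)
    have Gsub: "G a \<subseteq> E_set I \<gamma> \<psi> q \<inter> {u<..<v}" if aA: "a \<in> A" for a
    proof
      fix t assume t: "t \<in> G a"
      have a1: "x \<le> real a / real q" "real a / real q < y" "a \<in> I q" using aA unfolding A_def by auto
      have tc: "\<bar>t - c a\<bar> \<le> r" using t unfolding G_def by auto
      have "u < t" using t a1 cdiff[of a] gam rsm unfolding G_def x_def by (auto simp: abs_le_iff)
      moreover have "t < v" using t a1 cdiff[of a] gam rsm unfolding G_def y_def by (auto simp: abs_le_iff)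
      moreover have "dist_nint (t - (real a + \<gamma>) / real q) \<le> \<psi> q / real q"
        using dn_le[of "t - c a"] tc unfolding c_def r_def by linarith
      ultimately show "t \<in> E_set I \<gamma> \<psi> q \<inter> {u<..<v}"
        unfolding E_set_def using a1(3) uv by auto
    qed
    have aux: "G a \<inter> G b = {}" if "a < b" for a b
    proof -
      have "c b - c a = (real b - real a) / real q" unfolding c_def using q0 by (simp add: field_simps)
      moreover have "real a + 1 \<le> real b" using that by simp
      then have "1 / real q \<le> (real b - real a) / real q" using q0 by (intro divide_right_mono) auto
      ultimately have "c b - c a \<ge> 1 / real q" by simp
      then have "c a + r \<le> c b - r" using r1 by linarith
      then show ?thesis unfolding G_def by auto
    qed
    have disj: "disjoint_family_on G A" unfolding disjoint_family_on_def
    proof (intro ballI impI)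
      fix a b assume "a \<in> A" "b \<in> A" "a \<noteq> b"
      then show "G a \<inter> G b = {}"
        using aux[of a b] aux[of b a] by (cases "a < b") (auto simp: Int_commute)
    qed
    have "measure lebesgue (\<Union>a\<in>A. G a) = (\<Sum>a\<in>A. measure lebesgue (G a))"
      by (rule measure_finite_Union) (use finA disj r0 in \<open>auto simp: G_def\<close>)
    also have "\<dots> = (\<Sum>a\<in>A. 2 * r)"
      by (rule sum.cong) (auto simp: G_def r0 measure_completion)
    finally have mU: "measure lebesgue (\<Union>a\<in>A. G a) = real (card A) * (2 * r)" by simp
    have "measure lebesgue (\<Union>a\<in>A. G a) \<le> measure lebesgue (E_set I \<gamma> \<psi> q \<inter> {u<..<v})"
    proof (rule measure_mono_fmeasurable)
      show "(\<Union>a\<in>A. G a) \<subseteq> E_set I \<gamma> \<psi> q \<inter> {u<..<v}" using Gsub by auto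
      show "(\<Union>a\<in>A. G a) \<in> sets lebesgue" using finA by (auto simp: G_def)
      show "E_set I \<gamma> \<psi> q \<inter> {u<..<v} \<in> fmeasurable lebesgue"
      proof (rule fmeasurableI2[of "{u..v}"])
        show "{u..v} \<in> fmeasurable lebesgue" by (rule lmeasurable_interval(1))
        show "E_set I \<gamma> \<psi> q \<inter> {u<..<v} \<subseteq> {u..v}" by auto
        show "E_set I \<gamma> \<psi> q \<inter> {u<..<v} \<in> sets lebesgue" using E_sets[of I q \<gamma> \<psi>, OF finI] by auto
      qed
    qed
    then have m1: "real (card A) * (2 * r) \<le> measure lebesgue (E_set I \<gamma> \<psi> q \<inter> {u<..<v})"
      using mU by simp
    have cardA: "real (card A) \<ge> real (card (I q)) * (v - u - \<delta>)"
    proof (cases "card (I q) = 0")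
      case True then show ?thesis by simp
    next
      case False
      have "y - x - \<eta> < real (card A) / real (card (I q))" using elim(1) unfolding A_def .
      moreover have "v - u - \<delta> \<le> y - x - \<eta>" unfolding x_def y_def \<eta>_def using d by linarith
      ultimately have "v - u - \<delta> < real (card A) / real (card (I q))" by linarith
      then show ?thesis using False by (simp add: field_simps)
    qed
    have "2 * (real (card (I q)) * \<psi> q / real q) * (v - u - \<delta>) = (real (card (I q)) * (v - u - \<delta>)) * (2 * r)"
      using q0 unfolding r_def by (simp add: field_simps)
    also have "\<dots> \<le> real (card A) * (2 * r)" using cardA r0 by (intro mult_right_mono) auto
    finally show ?case using m1 by linarith
  qed
qed




lemma fin01: "A \<in> sets lebesgue \<Longrightarrow> A \<subseteq> {0..1::real} \<Longrightarrow> emeasure lebesgue A < \<infinity>"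
proof -
  assume A: "A \<in> sets lebesgue" "A \<subseteq> {0..1::real}"
  have "emeasure lebesgue A \<le> emeasure lebesgue {0..1::real}"
    by (rule emeasure_mono) (use A in auto)
  also have "\<dots> = 1" by (simp add: emeasure_completion)
  finally show ?thesis by (simp add: le_less_trans)
qed

lemma sum_sym:
  fixes f :: "nat \<Rightarrow> nat \<Rightarrow> real"
  assumes S: "finite S" and sym: "\<And>q r. f q r = f r q"
  shows "(\<Sum>q\<in>S. \<Sum>r\<in>S. f q r) = (\<Sum>q\<in>S. f q q) + 2 * (\<Sum>(q, r)\<in>{(q, r) \<in> S \<times> S. r < q}. f q r)"
proof -
  define P where "P = {(q, r) \<in> S \<times> S. r < q}"
  define P' where "P' = {(q, r) \<in> S \<times> S. q < r}"
  define D where "D = {(q, r) \<in> S \<times> S. q = r}"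
  have fins: "finite P" "finite P'" "finite D" unfolding P_def P'_def D_def
    by (auto intro: finite_subset[OF _ finite_cartesian_product[OF S S]])
  have "(\<Sum>q\<in>S. \<Sum>r\<in>S. f q r) = (\<Sum>(q,r)\<in>S \<times> S. f q r)"
    by (simp add: sum.cartesian_product)
  also have "S \<times> S = D \<union> (P \<union> P')" unfolding D_def P_def P'_def by auto
  also have "(\<Sum>(q,r)\<in>D \<union> (P \<union> P'). f q r) = (\<Sum>(q,r)\<in>D. f q r) + ((\<Sum>(q,r)\<in>P. f q r) + (\<Sum>(q,r)\<in>P'. f q r))"
  proof -
    have d1: "D \<inter> (P \<union> P') = {}" and d2: "P \<inter> P' = {}" unfolding D_def P_def P'_def by auto
    have "(\<Sum>(q,r)\<in>D \<union> (P \<union> P'). f q r) = (\<Sum>(q,r)\<in>D. f q r) + (\<Sum>(q,r)\<in>P \<union> P'. f q r)"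
      by (rule sum.union_disjoint) (use fins d1 in auto)
    moreover have "(\<Sum>(q,r)\<in>P \<union> P'. f q r) = (\<Sum>(q,r)\<in>P. f q r) + (\<Sum>(q,r)\<in>P'. f q r)"
      by (rule sum.union_disjoint) (use fins d2 in auto)
    ultimately show ?thesis by simp
  qed
  also have "(\<Sum>(q,r)\<in>D. f q r) = (\<Sum>q\<in>S. f q q)"
  proof -
    have "D = (\<lambda>q. (q,q)) ` S" unfolding D_def by auto
    then show ?thesis by (simp add: sum.reindex inj_on_def)
  qed
  also have "(\<Sum>(q,r)\<in>P'. f q r) = (\<Sum>(q,r)\<in>P. f q r)"
  proof -
    have "P' = prod.swap ` P" unfolding P_def P'_def by auto
    then have "(\<Sum>(q,r)\<in>P'. f q r) = (\<Sum>p\<in>P. (\<lambda>(q,r). f q r) (prod.swap p))"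
      by (simp add: sum.reindex)
    also have "\<dots> = (\<Sum>(q,r)\<in>P. f q r)" by (rule sum.cong) (auto simp: sym)
    finally show ?thesis .
  qed
  finally show ?thesis unfolding P_def by simp
qed

lemma cs_bound:
  fixes E :: "nat \<Rightarrow> real set" and S :: "nat set"
  assumes S: "finite S" and Es: "\<And>q. E q \<in> sets lebesgue" and E01: "\<And>q. E q \<subseteq> {0..1}"
    and W: "W \<in> sets lebesgue" "W \<subseteq> {0..1}" and s: "s > 0"
  shows "2 * s * (\<Sum>q\<in>S. measure lebesgue (E q \<inter> W))
          \<le> s^2 * measure lebesgue W + (\<Sum>q\<in>S. \<Sum>r\<in>S. measure lebesgue (E q \<inter> E r))"
proof -
  define h where "h x = (\<Sum>q\<in>S. indicator (E q) x :: real)" for x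
  define g1 where "g1 x = (\<Sum>q\<in>S. indicator (E q \<inter> W) x :: real)" for x
  define g2 where "g2 x = (\<Sum>q\<in>S. \<Sum>r\<in>S. indicator (E q \<inter> E r) x :: real)" for x
  have h0: "h x \<ge> 0" for x unfolding h_def by (intro sum_nonneg) auto
  have g1h: "g1 x = indicator W x * h x" for x
    unfolding g1_def h_def by (simp add: sum_distrib_left indicator_inter_arith mult.commute)
  have g2h: "g2 x = h x * h x" for x
    unfolding g2_def h_def by (simp add: sum_product indicator_inter_arith)
  have pw: "2 * s * g1 x \<le> s^2 * indicator W x + g2 x" for x
  proof (cases "x \<in> W")
    case True
    have "0 \<le> (s - h x)^2" by simp
    then show ?thesis using True by (simp add: g1h g2h power2_eq_square algebra_simps)
  next
    case False
    then show ?thesis using h0[of x] s by (simp add: g1h g2h)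
  qed
  have int_ind: "integrable lebesgue (indicator A :: real \<Rightarrow> real)" if "A \<in> sets lebesgue" "A \<subseteq> {0..1}" for A
    using fin01[OF that] that by simp
  have intq: "integrable lebesgue (indicator (E q \<inter> W) :: real \<Rightarrow> real)" for q
    by (rule int_ind) (use Es W E01 in auto)
  have intqr: "integrable lebesgue (indicator (E q \<inter> E r) :: real \<Rightarrow> real)" for q r
    by (rule int_ind) (use Es E01 in auto)
  have ig1: "integrable lebesgue g1" unfolding g1_def
    by (intro Bochner_Integration.integrable_sum intq)
  have ig2: "integrable lebesgue g2" unfolding g2_def
    by (intro Bochner_Integration.integrable_sum intqr)
  have iW: "integrable lebesgue (indicator W :: real \<Rightarrow> real)" by (rule int_ind) (use W in auto)
  have meas_int: "integral\<^sup>L lebesgue (indicator A :: real \<Rightarrow> real) = measure lebesgue A" if "A \<in> sets lebesgue" "A \<subseteq> {0..1}" for A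
    using fin01[OF that] that by (simp add: less_top)
  have I1: "integral\<^sup>L lebesgue g1 = (\<Sum>q\<in>S. measure lebesgue (E q \<inter> W))"
  proof -
    have "integral\<^sup>L lebesgue g1 = (\<Sum>q\<in>S. integral\<^sup>L lebesgue (indicator (E q \<inter> W) :: real \<Rightarrow> real))"
      unfolding g1_def by (intro Bochner_Integration.integral_sum intq)
    also have "\<dots> = (\<Sum>q\<in>S. measure lebesgue (E q \<inter> W))"
      by (rule sum.cong) (use Es W E01 in \<open>auto intro!: meas_int\<close>)
    finally show ?thesis .
  qed
  have I2: "integral\<^sup>L lebesgue g2 = (\<Sum>q\<in>S. \<Sum>r\<in>S. measure lebesgue (E q \<inter> E r))"
  proof -
    have "integral\<^sup>L lebesgue g2 = (\<Sum>q\<in>S. integral\<^sup>L lebesgue (\<lambda>x. \<Sum>r\<in>S. indicator (E q \<inter> E r) x :: real))"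
      unfolding g2_def by (intro Bochner_Integration.integral_sum Bochner_Integration.integrable_sum intqr)
    also have "\<dots> = (\<Sum>q\<in>S. \<Sum>r\<in>S. integral\<^sup>L lebesgue (indicator (E q \<inter> E r) :: real \<Rightarrow> real))"
      by (intro sum.cong refl Bochner_Integration.integral_sum intqr)
    also have "\<dots> = (\<Sum>q\<in>S. \<Sum>r\<in>S. measure lebesgue (E q \<inter> E r))"
      by (intro sum.cong refl meas_int) (use Es E01 in auto)
    finally show ?thesis .
  qed
  have "integral\<^sup>L lebesgue (\<lambda>x. 2 * s * g1 x) \<le> integral\<^sup>L lebesgue (\<lambda>x. s^2 * indicator W x + g2 x)"
    by (rule integral_mono) (use ig1 ig2 iW pw in auto)
  also have "integral\<^sup>L lebesgue (\<lambda>x. s^2 * indicator W x + g2 x) = s^2 * measure lebesgue W + integral\<^sup>L lebesgue g2"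
    using iW ig2 meas_int[OF W] by simp
  finally show ?thesis using I1 I2 by simp
qed




lemma key:
  fixes E :: "nat \<Rightarrow> real set" and w :: "nat \<Rightarrow> real" and S :: "nat \<Rightarrow> nat set"
    and B :: "real set" and C' c :: real
  assumes Es: "\<And>q. E q \<in> sets lebesgue" and E01: "\<And>q. E q \<subseteq> {0..1}"
    and w0: "\<And>q. w q \<ge> 0"
    and ub: "\<And>q. measure lebesgue (E q) \<le> 8 * w q"
    and lb: "\<And>u v \<delta>. 0 \<le> u \<Longrightarrow> u \<le> v \<Longrightarrow> v \<le> 1 \<Longrightarrow> \<delta> > 0 \<Longrightarrow>
       \<forall>\<^sub>F q in sequentially. measure lebesgue (E q \<inter> {u<..<v}) \<ge> 2 * w q * (v - u - \<delta>)"
    and C'_pos: "C' > 0" and c_pos: "c > 0"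
    and S_fin: "\<And>k. finite (S k)"
    and S_min: "\<And>M. \<forall>\<^sub>F k in sequentially. \<forall>q \<in> S k. M \<le> q"
    and ev: "\<forall>\<^sub>F k in sequentially.
       (\<Sum>q\<in>S k. w q) \<ge> c \<and>
       (\<Sum>(q, r)\<in>{(q, r) \<in> S k \<times> S k. r < q}. measure lebesgue (E q \<inter> E r))
         \<le> C' * (\<Sum>q\<in>S k. w q)^2"
    and Bs: "B \<in> sets lebesgue" "B \<subseteq> {0..1}" and Bq: "\<And>q. q \<ge> n \<Longrightarrow> E q \<inter> B = {}"
  shows "measure lebesgue B = 0"
proof (rule ccontr)
  define m where "m = measure lebesgue B"
  assume "measure lebesgue B \<noteq> 0"
  then have mpos: "m > 0" using measure_nonneg[of lebesgue B] unfolding m_def by linarith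
  define K where "K = 8 / c + 2 * C'"
  have Kpos: "K > 0" unfolding K_def using c_pos C'_pos by (intro add_pos_pos) auto
  define t where "t = 4 * K / m"
  have tpos: "t > 0" using Kpos mpos by (simp add: t_def)
  have Kt: "K = t * m / 4" using mpos by (simp add: t_def)
  define \<epsilon> where "\<epsilon> = min (m/16) (m / (4*t))"
  have epos: "\<epsilon> > 0" using mpos tpos by (simp add: \<epsilon>_def)
  have e1: "\<epsilon> \<le> m/16" by (simp add: \<epsilon>_def)
  have e2: "t * \<epsilon> \<le> m/4"
  proof -
    have "\<epsilon> \<le> m / (4*t)" by (simp add: \<epsilon>_def)
    then have "t * \<epsilon> \<le> t * (m / (4*t))" using tpos by (intro mult_left_mono) auto
    also have "\<dots> = m/4" using tpos by simp
    finally show ?thesis .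
  qed
  have Blm: "B \<in> lmeasurable"
    by (rule fmeasurableI2[of "{0..1}"]) (use Bs in auto)
  have Bsub: "B \<subseteq> cbox 0 (1::real)" using Bs by simp
  obtain \<D> where D1: "countable \<D>"
        and D2: "\<And>K. K \<in> \<D> \<Longrightarrow> K \<subseteq> cbox 0 1 \<and> K \<noteq> {} \<and> (\<exists>c d. K = cbox c d)"
        and D3: "pairwise (\<lambda>A B. interior A \<inter> interior B = {}) \<D>"
        and D6: "B \<subseteq> \<Union>\<D>" and D7: "\<Union>\<D> \<in> lmeasurable"
        and D8: "measure lebesgue (\<Union>\<D>) \<le> measure lebesgue B + \<epsilon>"
    by (rule measurable_outer_intervals_bounded[OF Blm Bsub epos]) (rule that)
  have DI: "\<exists>a b. D = {a..b} \<and> 0 \<le> a \<and> a \<le> b \<and> b \<le> 1" if DD: "D \<in> \<D>" for D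
  proof -
    obtain a b where ab: "D = cbox a b" "D \<subseteq> cbox 0 1" "D \<noteq> {}" using D2[OF DD] by blast
    then have "a \<le> b" by auto
    then show ?thesis using ab by auto
  qed
  define lo where "lo D = Inf D" for D :: "real set"
  define hi where "hi D = Sup D" for D :: "real set"
  have DI2: "D = {lo D..hi D} \<and> 0 \<le> lo D \<and> lo D \<le> hi D \<and> hi D \<le> 1" if "D \<in> \<D>" for D
    using DI[OF that] unfolding lo_def hi_def by auto
  have Dsets: "D \<in> sets lebesgue" if "D \<in> \<D>" for D
    using DI2[OF that] by (metis sets_lborel sets_completionI_sets atLeastAtMost_borel)
  have Dmeas: "measure lebesgue D = hi D - lo D" if "D \<in> \<D>" for D
    using DI2[OF that] by (metis measure_completion measure_lborel_Icc atLeastAtMost_borel sets_lborel)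
  have Dint: "{lo D<..<hi D} \<inter> {lo D'<..<hi D'} = {}" if "D \<in> \<D>" "D' \<in> \<D>" "D \<noteq> D'" for D D'
  proof -
    have "interior D \<inter> interior D' = {}" using D3 that unfolding pairwise_def by blast
    then show ?thesis using DI2[OF that(1)] DI2[OF that(2)] by (metis interior_atLeastAtMost_real)
  qed
  have Dne: "\<D> \<noteq> {}"
  proof
    assume "\<D> = {}"
    then have "B = {}" using D6 by auto
    then show False using mpos unfolding m_def by simp
  qed
  define f where "f = from_nat_into \<D>"
  have rf: "range f = \<D>" unfolding f_def using Dne D1 by simp
  define A where "A i = \<Union>(f ` {..<i})" for i
  have Asets: "range A \<subseteq> sets lebesgue"
    unfolding A_def using rf Dsets by (auto intro!: sets.finite_Union)
  have Ainc: "incseq A" unfolding A_def incseq_def by (intro allI impI UN_mono) auto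
  have AU: "(\<Union>i. A i) = \<Union>\<D>" unfolding A_def using rf by auto
  have Dsub01: "\<Union>\<D> \<subseteq> {0..1}" using D2 by fastforce
  have UDfin: "emeasure lebesgue (\<Union>\<D>) \<noteq> \<infinity>" using fmeasurableD2[OF D7] by simp
  have "(\<lambda>i. measure lebesgue (A i)) \<longlonglongrightarrow> measure lebesgue (\<Union>\<D>)"
    using Lim_measure_incseq[OF Asets Ainc] AU UDfin by simp
  then have "\<forall>\<^sub>F i in sequentially. measure lebesgue (\<Union>\<D>) - \<epsilon> < measure lebesgue (A i)"
    using epos by (intro order_tendstoD(1)) auto
  then obtain i where Ai: "measure lebesgue (\<Union>\<D>) - \<epsilon> < measure lebesgue (A i)"
    using eventually_sequentially by auto
  define F where "F = f ` {..<i}"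
  define U where "U = \<Union>F"
  have Ffin: "finite F" unfolding F_def by simp
  have FD: "F \<subseteq> \<D>" unfolding F_def using rf by auto
  have UA: "U = A i" unfolding U_def F_def A_def by simp
  have Usets: "U \<in> sets lebesgue" using Asets UA by auto
  have UD: "U \<subseteq> \<Union>\<D>" using FD unfolding U_def by auto
  have U01: "U \<subseteq> {0..1}" using UD Dsub01 by auto
  have mB: "m \<le> measure lebesgue (\<Union>\<D>)"
    unfolding m_def by (rule measure_mono_fmeasurable[OF D6]) (use Bs D7 in auto)
  have mU: "measure lebesgue U \<ge> m - \<epsilon>" using Ai mB unfolding UA by linarith
  have mUB: "measure lebesgue (U - B) \<le> \<epsilon>"
  proof -
    have "measure lebesgue (U - B) \<le> measure lebesgue (\<Union>\<D> - B)"
      by (rule measure_mono_fmeasurable) (use UD Usets Bs fmeasurable_Diff[OF D7 Bs(1)] in auto)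
    also have "\<dots> = measure lebesgue (\<Union>\<D>) - m"
      unfolding m_def by (rule measure_Diff) (use UDfin D7 Bs D6 in auto)
    finally show ?thesis using D8 unfolding m_def by linarith
  qed
  have sumlen: "measure lebesgue U \<le> (\<Sum>D\<in>F. hi D - lo D)"
  proof -
    have "measure lebesgue U \<le> (\<Sum>D\<in>F. measure lebesgue D)"
      unfolding U_def by (rule measure_Union_le) (use Ffin FD Dsets in auto)
    also have "\<dots> = (\<Sum>D\<in>F. hi D - lo D)" by (rule sum.cong) (use FD Dmeas in auto)
    finally show ?thesis .
  qed
  define \<delta> where "\<delta> = \<epsilon> / (real (card F) + 1)"
  have dpos: "\<delta> > 0" using epos by (simp add: \<delta>_def)
  have cardd: "real (card F) * \<delta> \<le> \<epsilon>"
  proof -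
    have "real (card F) * \<delta> = \<epsilon> * (real (card F) / (real (card F) + 1))" by (simp add: \<delta>_def)
    also have "\<dots> \<le> \<epsilon> * 1" using epos by (intro mult_left_mono) auto
    finally show ?thesis by simp
  qed
  have "\<forall>\<^sub>F q in sequentially. \<forall>D\<in>F. measure lebesgue (E q \<inter> {lo D<..<hi D}) \<ge> 2 * w q * (hi D - lo D - \<delta>)"
    using Ffin
  proof (rule eventually_ball_finite, intro ballI)
    fix D assume "D \<in> F"
    then have "D \<in> \<D>" using FD by auto
    then show "\<forall>\<^sub>F q in sequentially. measure lebesgue (E q \<inter> {lo D<..<hi D}) \<ge> 2 * w q * (hi D - lo D - \<delta>)"
      using DI2 dpos by (intro lb) auto
  qed
  then obtain N where N: "\<And>q. q \<ge> N \<Longrightarrow> \<forall>D\<in>F. measure lebesgue (E q \<inter> {lo D<..<hi D}) \<ge> 2 * w q * (hi D - lo D - \<delta>)"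
    using eventually_sequentially by auto
  have C1: "measure lebesgue (E q \<inter> U) \<ge> 2 * w q * (measure lebesgue U - \<epsilon>)" if "q \<ge> N" for q
  proof -
    have disj: "disjoint_family_on (\<lambda>D. E q \<inter> {lo D<..<hi D}) F"
      unfolding disjoint_family_on_def using Dint FD by blast
    have "(\<Union>D\<in>F. E q \<inter> {lo D<..<hi D}) \<subseteq> E q \<inter> U"
      unfolding U_def using FD DI2 by fastforce
    moreover have s1: "(\<Union>D\<in>F. E q \<inter> {lo D<..<hi D}) \<in> sets lebesgue"
      using Ffin Es by (intro sets.finite_UN sets.Int) auto
    moreover have s2: "E q \<inter> U \<in> fmeasurable lebesgue"
      by (rule fmeasurableI2[of "{0..1}"]) (use Es Usets E01 in auto)
    ultimately have mono: "measure lebesgue (\<Union>D\<in>F. E q \<inter> {lo D<..<hi D}) \<le> measure lebesgue (E q \<inter> U)"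
      by (rule measure_mono_fmeasurable)
    have fins: "emeasure lebesgue (E q \<inter> {lo D<..<hi D}) \<noteq> \<infinity>" for D
    proof -
      have "emeasure lebesgue (E q \<inter> {lo D<..<hi D}) < \<infinity>"
        by (rule fin01) (use Es E01 in auto)
      then show ?thesis by (rule less_imp_neq)
    qed
    have "measure lebesgue (\<Union>D\<in>F. E q \<inter> {lo D<..<hi D}) = (\<Sum>D\<in>F. measure lebesgue (E q \<inter> {lo D<..<hi D}))"
      by (rule measure_finite_Union[OF Ffin _ disj fins]) (use Es in auto)
    moreover have "(\<Sum>D\<in>F. measure lebesgue (E q \<inter> {lo D<..<hi D})) \<ge> (\<Sum>D\<in>F. 2 * w q * (hi D - lo D - \<delta>))"
      by (rule sum_mono) (use N[OF that] in auto)
    moreover have "(\<Sum>D\<in>F. 2 * w q * (hi D - lo D - \<delta>)) = 2 * w q * ((\<Sum>D\<in>F. hi D - lo D) - real (card F) * \<delta>)"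
    proof -
      have "(\<Sum>D\<in>F. 2 * w q * (hi D - lo D - \<delta>)) = (\<Sum>D\<in>F. 2 * w q * (hi D - lo D) - 2 * w q * \<delta>)"
        by (simp add: algebra_simps)
      also have "\<dots> = 2 * w q * (\<Sum>D\<in>F. hi D - lo D) - real (card F) * (2 * w q * \<delta>)"
        by (simp add: sum_subtractf flip: sum_distrib_left)
      finally show ?thesis by (simp add: algebra_simps)
    qed
    moreover have "2 * w q * ((\<Sum>D\<in>F. hi D - lo D) - real (card F) * \<delta>) \<ge> 2 * w q * (measure lebesgue U - \<epsilon>)"
      using sumlen cardd w0[of q] by (intro mult_left_mono) auto
    ultimately show ?thesis using mono by linarith
  qed
  have "\<forall>\<^sub>F k in sequentially. (\<forall>q \<in> S k. max N n \<le> q) \<and>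
       (\<Sum>q\<in>S k. w q) \<ge> c \<and>
       (\<Sum>(q, r)\<in>{(q, r) \<in> S k \<times> S k. r < q}. measure lebesgue (E q \<inter> E r))
         \<le> C' * (\<Sum>q\<in>S k. w q)^2"
    using S_min[of "max N n"] ev by eventually_elim auto
  then obtain k where k1: "\<forall>q \<in> S k. max N n \<le> q" and k2: "(\<Sum>q\<in>S k. w q) \<ge> c"
    and k3: "(\<Sum>(q, r)\<in>{(q, r) \<in> S k \<times> S k. r < q}. measure lebesgue (E q \<inter> E r))
         \<le> C' * (\<Sum>q\<in>S k. w q)^2"
    using eventually_sequentially by auto
  define L where "L = (\<Sum>q\<in>S k. w q)"
  have Lpos: "L > 0" using k2 c_pos unfolding L_def by linarith
  define W where "W = U - B"
  define X where "X = (\<Sum>q\<in>S k. measure lebesgue (E q \<inter> W))"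
  have XU: "X = (\<Sum>q\<in>S k. measure lebesgue (E q \<inter> U))"
    unfolding X_def W_def
  proof (rule sum.cong)
    fix q assume "q \<in> S k"
    then have "E q \<inter> B = {}" using k1 Bq by auto
    then show "measure lebesgue (E q \<inter> (U - B)) = measure lebesgue (E q \<inter> U)"
      by (metis Diff_Int_distrib Diff_empty Int_Diff)
  qed simp
  have X1: "X \<ge> 2 * L * (measure lebesgue U - \<epsilon>)"
  proof -
    have "X \<ge> (\<Sum>q\<in>S k. 2 * w q * (measure lebesgue U - \<epsilon>))"
      unfolding XU by (rule sum_mono) (use C1 k1 in auto)
    then show ?thesis unfolding L_def by (simp add: sum_distrib_right sum_distrib_left mult.assoc)
  qed
  define s where "s = t * L"
  have spos: "s > 0" using tpos Lpos by (simp add: s_def)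
  have Wsets: "W \<in> sets lebesgue" "W \<subseteq> {0..1}" unfolding W_def using Usets Bs U01 by auto
  have CS: "2 * s * X \<le> s^2 * measure lebesgue W + (\<Sum>q\<in>S k. \<Sum>r\<in>S k. measure lebesgue (E q \<inter> E r))"
    unfolding X_def by (rule cs_bound[OF S_fin Es E01 Wsets spos])
  have "(\<Sum>q\<in>S k. \<Sum>r\<in>S k. measure lebesgue (E q \<inter> E r)) =
     (\<Sum>q\<in>S k. measure lebesgue (E q \<inter> E q)) + 2 * (\<Sum>(q, r)\<in>{(q, r) \<in> S k \<times> S k. r < q}. measure lebesgue (E q \<inter> E r))"
    by (rule sum_sym[OF S_fin]) (simp add: Int_commute)
  also have "(\<Sum>q\<in>S k. measure lebesgue (E q \<inter> E q)) \<le> 8 * L"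
    unfolding L_def sum_distrib_left by (simp add: sum_mono ub)
  finally have SS: "(\<Sum>q\<in>S k. \<Sum>r\<in>S k. measure lebesgue (E q \<inter> E r)) \<le> 8 * L + 2 * C' * L^2"
    using k3 unfolding L_def by linarith
  have "8 * L \<le> 8 / c * L^2"
  proof -
    have "8 * L = 8 / c * (c * L)" using c_pos by simp
    also have "\<dots> \<le> 8 / c * (L * L)" using c_pos Lpos k2 unfolding L_def[symmetric]
      by (intro mult_left_mono mult_right_mono) auto
    finally show ?thesis by (simp add: power2_eq_square)
  qed
  then have SS2: "(\<Sum>q\<in>S k. \<Sum>r\<in>S k. measure lebesgue (E q \<inter> E r)) \<le> K * L^2"
    using SS unfolding K_def by (simp add: algebra_simps)
  have "2 * s * (2 * L * (measure lebesgue U - \<epsilon>)) \<le> 2 * s * X"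
    using X1 spos by (intro mult_left_mono) auto
  also have "\<dots> \<le> s^2 * \<epsilon> + K * L^2"
  proof -
    have "s^2 * measure lebesgue W \<le> s^2 * \<epsilon>" using mUB unfolding W_def by (intro mult_left_mono) auto
    then show ?thesis using CS SS2 by linarith
  qed
  finally have "(L^2 * t) * (4 * (measure lebesgue U - \<epsilon>)) \<le> (L^2 * t) * (t * \<epsilon> + m / 4)"
    unfolding s_def Kt by (simp add: power2_eq_square algebra_simps)
  then have "4 * (measure lebesgue U - \<epsilon>) \<le> t * \<epsilon> + m / 4"
    using Lpos tpos by (simp add: mult_le_cancel_left_pos)
  then have "4 * (measure lebesgue U - \<epsilon>) \<le> m / 2" using e2 by linarith
  moreover have "4 * (m - 2 * \<epsilon>) \<le> 4 * (measure lebesgue U - \<epsilon>)" using mU by simp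
  ultimately have "4 * (m - 2 * \<epsilon>) \<le> m / 2" by (rule order_trans[rotated])
  then show False using e1 mpos by simp
qed




theorem mainTheorem9:
  fixes \<gamma> :: real and \<psi> :: "nat \<Rightarrow> real" and I :: "nat \<Rightarrow> nat set"
    and S :: "nat \<Rightarrow> nat set" and C' c :: real
  assumes psi_range: "\<And>q. 0 \<le> \<psi> q \<and> \<psi> q \<le> 1/2"
    and I_sub: "\<And>q. I q \<subseteq> {0..<q}"
    and unif: "\<And>x y. 0 \<le> x \<Longrightarrow> x \<le> y \<Longrightarrow> y \<le> 1 \<Longrightarrow>
       ((\<lambda>q. real (card {a \<in> I q. real a / real q \<in> {x..<y}}) / real (card (I q)))
          \<longlongrightarrow> y - x) sequentially"
    and C'_pos: "C' > 0" and c_pos: "c > 0"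
    and S_fin: "\<And>k. finite (S k)"
    and S_min: "\<And>M. \<forall>\<^sub>F k in sequentially. \<forall>q \<in> S k. M \<le> q"
    and ev: "\<forall>\<^sub>F k in sequentially.
       (\<Sum>q\<in>S k. real (card (I q)) * \<psi> q / real q) \<ge> c \<and>
       (\<Sum>(q, r)\<in>{(q, r) \<in> S k \<times> S k. r < q}.
          measure lebesgue (E_set I \<gamma> \<psi> q \<inter> E_set I \<gamma> \<psi> r))
         \<le> C' * (\<Sum>q\<in>S k. real (card (I q)) * \<psi> q / real q)^2"
  shows "measure lebesgue (limsup (\<lambda>q. E_set I \<gamma> \<psi> q)) = 1"
proof -
  define E where "E = E_set I \<gamma> \<psi>"
  have finI: "finite (I q)" for q using I_sub[of q] by (rule finite_subset) simp
  have Es: "E q \<in> sets lebesgue" for q unfolding E_def by (rule E_sets[of I q \<gamma> \<psi>, OF finI])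
  have E01: "E q \<subseteq> {0..1}" for q unfolding E_def E_set_def by auto
  define B where "B n = {0..1} - (\<Union>m\<in>{n..}. E m)" for n
  have Bnull: "B n \<in> null_sets lebesgue" for n
  proof -
    have Bs: "B n \<in> sets lebesgue" "B n \<subseteq> {0..1}" unfolding B_def using Es by auto
    have Bq: "E q \<inter> B n = {}" if "q \<ge> n" for q unfolding B_def using that by auto
    have "measure lebesgue (B n) = 0"
      unfolding E_def
      apply (rule key[of "E_set I \<gamma> \<psi>" "\<lambda>q. real (card (I q)) * \<psi> q / real q" C' c S "B n" n])
      using Es E01 unfolding E_def apply (simp, simp)
      subgoal for q using psi_range[of q] by simp
      subgoal for q using E_ub[of I q \<psi> \<gamma>, OF I_sub[of q] psi_range[of q, THEN conjunct1] psi_range[of q, THEN conjunct2]] by simp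
      subgoal for u v \<delta> using E_lb[of \<psi> 0 I u v \<delta> \<gamma>, OF psi_range[THEN conjunct1] psi_range unif I_sub] by blast
      using C'_pos c_pos S_fin S_min ev Bs Bq unfolding E_def by auto
    moreover have "emeasure lebesgue (B n) \<noteq> \<infinity>" using fin01[OF Bs] by simp
    ultimately show ?thesis using Bs by (simp add: null_sets_def emeasure_eq_ennreal_measure)
  qed
  have Nnull: "(\<Union>n. B n) \<in> null_sets lebesgue" using Bnull by auto
  have ls: "limsup E = {0..1} - (\<Union>n. B n)"
  proof
    show "limsup E \<subseteq> {0..1} - (\<Union>n. B n)"
      unfolding limsup_INF_SUP B_def using E01 by fastforce
    show "{0..1} - (\<Union>n. B n) \<subseteq> limsup E"
      unfolding limsup_INF_SUP B_def by auto
  qed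
  have "measure lebesgue (limsup E) = measure lebesgue {0..1::real}"
    unfolding ls by (rule measure_Diff_null_set[OF _ Nnull]) simp
  also have "\<dots> = 1" by (simp add: measure_completion)
  finally show ?thesis unfolding E_def .
qed


end
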